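(* For $0\le i\le n$ and integers $d,p$: if $(d+1,p)\in DP_i$ and $(d,p)\ge(0,\pi_0)$, then $(d,p)\in DP_i$.
   Context: Let $x_0\le x_1\le\cdots\le x_{n+1}$ be real numbers, $\{x\}=x-\lfloor x\rfloor$, and let $\pi=(\pi_0,\dots,\pi_{n+1})$ be the permutation of $\{0,\dots,n+1\}$ such that for $0\le i<j\le n+1$, $\pi_i>\pi_j$ iff $(\{x_i\},-x_i,i)<(\{x_j\},-x_j,j)$ lexicographically. For a sequence of indices $s_0<\cdots<s_k$, a drop is a consecutive pair $(s_{h-1},s_h)$ with $\pi_{s_{h-1}}>\pi_{s_h}$. For $0\le h\le i\le n$, $dp(h,i)$ is the pair $(d(h,i),p(h,i))$, where $d(h,i)$ is the minimum number of drops over all sequences of $h+1$ indices $0=s_0<s_1<\cdots<s_h\le i$, and $p(h,i)$ is the minimum of $\pi_{s_h}$ over all such sequences having exactly $d(h,i)$ drops. Let $DP_i=\{dp(h,i)\mid 0\le h\le i\}$. Pairs are compared lexicographically. *)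

theory Defs
  imports Complex_Main "HOL-Library.Product_Lexorder"
begin

text \<open>Index sequences 0 = s_0 < s_1 < ... < s_h <= i (only values s 0 .. s h matter).\<close>
definition idx_seqs :: "nat \<Rightarrow> nat \<Rightarrow> (nat \<Rightarrow> nat) set" where
  "idx_seqs h i = {s. s 0 = 0 \<and> (\<forall>l<h. s l < s (Suc l)) \<and> s h \<le> i}"

definition drops :: "(nat \<Rightarrow> nat) \<Rightarrow> nat \<Rightarrow> (nat \<Rightarrow> nat) \<Rightarrow> nat" where
  "drops \<sigma> h s = card {l \<in> {1..h}. \<sigma> (s (l - 1)) > \<sigma> (s l)}"

definition d_val :: "(nat \<Rightarrow> nat) \<Rightarrow> nat \<Rightarrow> nat \<Rightarrow> nat" where
  "d_val \<sigma> h i = Min (drops \<sigma> h ` idx_seqs h i)"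

definition p_val :: "(nat \<Rightarrow> nat) \<Rightarrow> nat \<Rightarrow> nat \<Rightarrow> nat" where
  "p_val \<sigma> h i = Min ((\<lambda>s. \<sigma> (s h)) ` {s \<in> idx_seqs h i. drops \<sigma> h s = d_val \<sigma> h i})"

definition dp :: "(nat \<Rightarrow> nat) \<Rightarrow> nat \<Rightarrow> nat \<Rightarrow> int \<times> int" where
  "dp \<sigma> h i = (int (d_val \<sigma> h i), int (p_val \<sigma> h i))"

definition DP :: "(nat \<Rightarrow> nat) \<Rightarrow> nat \<Rightarrow> (int \<times> int) set" where
  "DP \<sigma> i = {dp \<sigma> h i | h. h \<le> i}"

end

theory Submission
  imports Defs
begin

lemma step_abs:
  fixes D P :: "nat \<Rightarrow> int" and m :: nat and v :: int and c' :: "nat \<Rightarrow> int \<times> int"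
  assumes mono: "\<And>a b. a < b \<Longrightarrow> b < m \<Longrightarrow> (D a, P a) < (D b, P b)"
    and D0: "D 0 = 0" and m1: "0 < m"
    and vd: "\<And>h. h < m \<Longrightarrow> P h \<noteq> v"
    and inv: "\<And>h e q. h < m \<Longrightarrow> (D h, P h) = (e+1,q) \<Longrightarrow> (e,q) \<ge> (0, P 0) \<Longrightarrow> \<exists>k<m. (D k, P k) = (e,q)"
    and c'def: "\<And>h. h \<le> m \<Longrightarrow> c' h = (if h = 0 then (D 0, P 0) else if h < m then min (D h, P h) (D (h-1) + (if P (h-1) > v then 1 else 0), v) else (D (h-1) + (if P (h-1) > v then 1 else 0), v))"
    and hm: "h \<le> m" and hc: "c' h = (e+1,q)" and hge: "(e,q) \<ge> (0, P 0)"
  shows "\<exists>k\<le>m. c' k = (e,q)"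
proof -
  have mono_le: "(D a, P a) \<le> (D b, P b)" if "a \<le> b" "b < m" for a b
    using mono[of a b] that by (cases "a = b") auto
  have rev: "a < b" if "a < m" "b < m" "(D a, P a) < (D b, P b)" for a b
  proof (rule ccontr)
    assume "\<not> a < b" then have "b \<le> a" by simp
    from mono_le[OF this \<open>a < m\<close>] that(3) show False by (meson leD)
  qed
  have Dnn: "D a \<ge> 0" if "a < m" for a
    using mono_le[of 0 a] that D0 by auto
  have lvl0: "P a \<ge> P 0" if "a < m" "D a = 0" for a
    using mono_le[of 0 a] that D0 by auto
  have K: "\<exists>j<m. c' j = (e',v)"
    if t0: "(e',v) \<ge> (0,P 0)" and g: "g < m" "(e',v) < (D g, P g)"
      and H: "\<And>j. 0<j \<Longrightarrow> j \<le> g \<Longrightarrow> (D(j-1),P(j-1)) < (e',v) \<Longrightarrow> (e',v) < (D j, P j) \<Longrightarrow> D (j-1) < e' \<Longrightarrow> D(j-1) = e'-1 \<and> P(j-1) > v"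
    for e' g
  proof -
    define j where "j = (LEAST j. (e',v) < (D j, P j))"
    have jg: "j \<le> g" unfolding j_def by (rule Least_le) (rule g(2))
    have cj: "(e',v) < (D j, P j)" unfolding j_def by (rule LeastI) (rule g(2))
    have j0: "j \<noteq> 0"
    proof
      assume "j = 0" with cj t0 D0 show False by auto
    qed
    have "\<not> (e',v) < (D (j-1), P (j-1))"
      unfolding j_def by (rule not_less_Least) (use j0 j_def in auto)
    moreover have "P (j-1) \<noteq> v" using vd jg g j0 by auto
    ultimately have cj1: "(D(j-1),P(j-1)) < (e',v)" by auto
    have st: "D (j-1) + (if P (j-1) > v then 1 else 0) = e'"
    proof (cases "D (j-1) < e'")
      case True
      from H[OF _ jg cj1 cj True] j0 show ?thesis by auto
    next
      case False
      with cj1 show ?thesis by auto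
    qed
    have "c' j = (e',v)" using c'def[of j] j0 jg g st cj less_imp_le_nat by (auto simp: min_def)
    moreover have "j < m" using jg g by simp
    ultimately show ?thesis by blast
  qed

  have h0: "h \<noteq> 0"
  proof
    assume "h = 0"
    with hc c'def[of 0] m1 D0 have "e = -1" by auto
    with hge show False by auto
  qed
  define st where "st = (\<lambda>h. (D (h-1) + (if P (h-1) > v then 1 else (0::int)), v))"
  have c'st: "c' a = (if a = 0 then (D 0, P 0) else if a < m then min (D a, P a) (st a) else st a)" if "a \<le> m" for a
    using c'def[of a] that unfolding st_def by simp
  show ?thesis
  proof (cases "h < m \<and> (D h, P h) \<le> st h")
    case False
    then have "c' h = st h" using c'st[of h] hm h0 by (auto simp: min_def)
    with hc have qv: "q = v" and ee: "D (h-1) + (if P (h-1) > v then 1 else 0) = e+1"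
      unfolding st_def by auto
    have hm1: "h - 1 < m" using hm h0 by auto
    have "\<exists>j<m. c' j = (e,v)"
    proof (cases "P (h-1) > v")
      case True
      with ee have De: "D (h-1) = e" by simp
      show ?thesis
      proof (rule K[of e "h-1"])
        show "(0, P 0) \<le> (e, v)" using hge qv by simp
        show "h - 1 < m" by fact
        show "(e, v) < (D (h - 1), P (h - 1))" using De True by simp
      next
        fix j assume j: "0 < j" "j \<le> h-1" "(D (j-1), P (j-1)) < (e, v)" "(e, v) < (D j, P j)" "D (j-1) < e"
        have jm: "j < m" using j hm1 by auto
        have "(D j, P j) \<le> (D (h-1), P (h-1))" using mono_le[OF j(2) hm1] .
        with j(4) De True have Dj: "D j = e" and Pj: "P j > v" by auto
        have "D (j-1) \<ge> 0" using Dnn jm by auto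
        with j(5) have e1: "e \<ge> 1" by simp
        show "D (j-1) = e-1 \<and> P (j-1) > v"
        proof (cases "(e-1, P j) \<ge> (0, P 0)")
          case True
          have "(D j, P j) = ((e-1)+1, P j)" using Dj by simp
          from inv[OF jm this True] obtain k where k: "k < m" "(D k, P k) = (e-1, P j)" by blast
          have "(D k, P k) < (D j, P j)" using k Dj by simp
          then have "k < j" using rev k(1) jm by blast
          then have "(D k, P k) \<le> (D (j-1), P (j-1))" using mono_le[of k "j-1"] jm by auto
          with k(2) j(5) have "D (j-1) = e-1" "P (j-1) \<ge> P j" by auto
          with Pj show ?thesis by simp
        next
          case False
          with e1 have "e = 1" "P j < P 0" by auto
          moreover have "D (j-1) \<ge> 0" using Dnn[of "j-1"] jm by simp
          ultimately have "D (j-1) = 0" using j(5) by simp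
          with lvl0[of "j-1"] jm have "P (j-1) \<ge> P 0" by auto
          with \<open>e = 1\<close> \<open>D (j-1) = 0\<close> \<open>P j < P 0\<close> Pj show ?thesis by simp
        qed
      qed
    next
      case False
      with vd[OF hm1] have Pl: "P (h-1) < v" by simp
      with ee have De: "D (h-1) = e+1" by simp
      show ?thesis
      proof (rule K[of e "h-1"])
        show "(0, P 0) \<le> (e, v)" using hge qv by simp
        show "h - 1 < m" by fact
        show "(e, v) < (D (h - 1), P (h - 1))" using De by simp
      next
        fix j assume j: "0 < j" "j \<le> h-1" "(D (j-1), P (j-1)) < (e, v)" "(e, v) < (D j, P j)" "D (j-1) < e"
        have jm: "j < m" using j hm1 by auto
        have "D (j-1) \<ge> 0" using Dnn jm by auto
        with j(5) have e1: "e \<ge> 1" by simp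
        have "(D (h-1), P (h-1)) = (e+1, P (h-1))" using De by simp
        from inv[OF hm1 this] e1 obtain k where k: "k < m" "(D k, P k) = (e, P (h-1))" by auto
        have "(D k, P k) < (D j, P j)" using k j(4) Pl by auto
        then have "k < j" using rev k(1) jm by blast
        then have "(D k, P k) \<le> (D (j-1), P (j-1))" using mono_le[of k "j-1"] jm by auto
        with k(2) j(5) have False by auto
        then show "D (j-1) = e-1 \<and> P (j-1) > v" ..
      qed
    qed
    then show ?thesis using qv by (metis less_imp_le)
  next
    case True
    then have hm': "h < m" and chst: "(D h, P h) \<le> st h" by auto
    have "c' h = (D h, P h)" using c'st[of h] hm h0 True by (auto simp: min_def)
    with hc have ch: "(D h, P h) = (e+1, q)" by simp
    from inv[OF hm' ch hge] obtain k where k: "k < m" "(D k, P k) = (e, q)" by blast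
    have "(D k, P k) < (D h, P h)" using k ch by simp
    then have kh: "k < h" using rev k(1) hm' by blast
    show ?thesis
    proof (cases "c' k = (D k, P k)")
      case True
      then show ?thesis using k by (metis less_imp_le)
    next
      case False
      then have k0: "k \<noteq> 0" using c'st[of 0] m1 by (metis less_imp_le_nat)
      with False c'st[of k] less_imp_le_nat[OF k(1)] k(1) have stk: "st k < (D k, P k)" by (auto simp: min_def split: if_splits)
      have hm1: "h - 1 < m" using hm' by auto
      have km1: "k - 1 < m" using k by auto
      have "(D k, P k) \<le> (D (h-1), P (h-1))" using mono_le[of k "h-1"] kh hm1 by auto
      moreover have "(D (h-1), P (h-1)) < (D h, P h)" using mono[of "h-1" h] h0 hm' by auto
      ultimately have c1: "(e,q) \<le> (D (h-1), P (h-1))" "(D (h-1), P (h-1)) < (e+1,q)" using k ch by auto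
      have Pq: "q \<noteq> v" using vd[OF hm'] ch by auto
      have Dk1: "D (k-1) \<ge> 0" using Dnn km1 by auto
      have ck1: "(D (k-1), P (k-1)) < (e, q)" using mono[of "k-1" k] k k0 by auto
      have False
      proof (cases "D (h-1) = e")
        case True
        with c1 have Pge: "P (h-1) \<ge> q" by auto
        from chst ch True have Ph: "P (h-1) > v" and "q \<le> v" unfolding st_def by (auto split: if_splits)
        with Pq have qv: "q < v" by simp
        from stk k qv have lt: "D (k-1) + (if P (k-1) > v then 1 else 0) < e" unfolding st_def by auto
        then have e1: "e \<ge> 1" using Dk1 by (auto split: if_splits)
        show False
        proof (cases "(e-1, P (h-1)) \<ge> (0, P 0)")
          case True
          have "(D (h-1), P (h-1)) = ((e-1)+1, P (h-1))" using \<open>D (h-1) = e\<close> by simp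
          from inv[OF hm1 this True] obtain l where l: "l < m" "(D l, P l) = (e-1, P (h-1))" by blast
          have "(D l, P l) < (D k, P k)" using l k by simp
          then have "l < k" using rev l(1) k(1) by blast
          then have "(D l, P l) \<le> (D (k-1), P (k-1))" using mono_le[of l "k-1"] km1 by auto
          with l(2) lt Ph show False by (auto split: if_splits)
        next
          case False
          with e1 have "e = 1" "P (h-1) < P 0" by auto
          with lt Dk1 have "D (k-1) = 0" "\<not> P (k-1) > v" by (auto split: if_splits)
          with lvl0[OF km1] \<open>P (h-1) < P 0\<close> Ph show False by auto
        qed
      next
        case False
        with c1 have De: "D (h-1) = e+1" and Plt: "P (h-1) < q" by auto
        show False
        proof (cases "P (h-1) > v")
          case True
          show False
          proof (cases "(e, P (h-1)) \<ge> (0, P 0)")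
            case True
            from inv[OF hm1 _ True] De obtain l where l: "l < m" "(D l, P l) = (e, P (h-1))" by auto
            have "(D l, P l) < (D k, P k)" using l k Plt by simp
            then have "l < k" using rev l(1) k(1) by blast
            then have "(D l, P l) \<le> (D (k-1), P (k-1))" using mono_le[of l "k-1"] km1 by auto
            with l(2) ck1 \<open>P (h-1) > v\<close> have "D (k-1) = e" "P (k-1) > v" by auto
            with stk k show False unfolding st_def by auto
          next
            case False
            then have "e = 0" "P (h-1) < P 0" using hge by auto
            with stk k Dk1 have "D (k-1) = 0" "\<not> P (k-1) > v" unfolding st_def by (auto split: if_splits)
            with lvl0[OF km1] \<open>P (h-1) < P 0\<close> \<open>P (h-1) > v\<close> show False by auto
          qed
        next
          case False
          from chst ch De False have "q \<le> v" unfolding st_def by auto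
          with Pq have qv: "q < v" by simp
          from stk k qv have lt: "D (k-1) + (if P (k-1) > v then 1 else 0) < e" unfolding st_def by auto
          then have e1: "e \<ge> 1" using Dk1 by (auto split: if_splits)
          from inv[OF hm1 _ ] De e1 obtain l where l: "l < m" "(D l, P l) = (e, P (h-1))" by auto
          have "(D l, P l) < (D k, P k)" using l k Plt by simp
          then have "l < k" using rev l(1) k(1) by blast
          then have "(D l, P l) \<le> (D (k-1), P (k-1))" using mono_le[of l "k-1"] km1 by auto
          with l(2) lt show False by (auto split: if_splits)
        qed
      qed
      then show ?thesis ..
    qed
  qed
qed


definition V :: "(nat \<Rightarrow> nat) \<Rightarrow> nat \<Rightarrow> (nat \<Rightarrow> nat) \<Rightarrow> int \<times> int" where
  "V \<sigma> h s = (int (drops \<sigma> h s), int (\<sigma> (s h)))"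

lemma idx_id: "h \<le> i \<Longrightarrow> (\<lambda>l. l) \<in> idx_seqs h i"
  by (simp add: idx_seqs_def)

lemma idx_ge: "s \<in> idx_seqs h i \<Longrightarrow> l \<le> h \<Longrightarrow> l \<le> s l"
proof (induction l)
  case 0 then show ?case by simp
next
  case (Suc l)
  then have "s l < s (Suc l)" by (simp add: idx_seqs_def)
  with Suc show ?case by simp
qed

lemma idx_last: "s \<in> idx_seqs h i \<Longrightarrow> l \<le> h \<Longrightarrow> s l \<le> s h"
proof -
  assume s: "s \<in> idx_seqs h i" and l: "l \<le> h"
  have "\<forall>l'. l \<le> l' \<longrightarrow> l' \<le> h \<longrightarrow> s l \<le> s l'"
  proof (intro allI impI)
    fix l' assume "l \<le> l'" "l' \<le> h"
    then show "s l \<le> s l'"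
    proof (induction l' rule: dec_induct)
      case base then show ?case by simp
    next
      case (step k)
      then have "s k < s (Suc k)" using s by (simp add: idx_seqs_def)
      with step show ?case by simp
    qed
  qed
  with l show ?thesis by simp
qed

lemma drops_le: "drops \<sigma> h s \<le> h"
proof -
  have "drops \<sigma> h s \<le> card {1..h}" unfolding drops_def by (rule card_mono) auto
  then show ?thesis by simp
qed

lemma drops_Suc: "drops \<sigma> (Suc k) s = drops \<sigma> k s + (if \<sigma> (s k) > \<sigma> (s (Suc k)) then 1 else 0)"
proof -
  let ?Q = "\<lambda>l. \<sigma> (s (l - 1)) > \<sigma> (s l)"
  have eq: "{l \<in> {1..Suc k}. ?Q l} = {l \<in> {1..k}. ?Q l} \<union> (if ?Q (Suc k) then {Suc k} else {})"
    by (auto simp: le_Suc_eq)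
  have "card ({l \<in> {1..k}. ?Q l} \<union> (if ?Q (Suc k) then {Suc k} else {})) =
        card {l \<in> {1..k}. ?Q l} + card (if ?Q (Suc k) then {Suc k} else {})"
    by (rule card_Un_disjoint) auto
  then show ?thesis unfolding drops_def eq by simp
qed

lemma drops_cong: "(\<And>l. l \<le> k \<Longrightarrow> s l = t l) \<Longrightarrow> drops \<sigma> k s = drops \<sigma> k t"
  unfolding drops_def
  by (rule arg_cong[where f = card]) auto

lemma dp_char:
  assumes "h \<le> i"
  shows "(\<exists>s\<in>idx_seqs h i. V \<sigma> h s = dp \<sigma> h i) \<and> (\<forall>s\<in>idx_seqs h i. dp \<sigma> h i \<le> V \<sigma> h s)"
proof -
  let ?I = "idx_seqs h i"
  have ne: "?I \<noteq> {}" using idx_id[OF assms] by blast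
  have fin1: "finite (drops \<sigma> h ` ?I)"
    by (rule finite_subset[of _ "{0..h}"]) (auto simp: drops_le)
  have dI: "d_val \<sigma> h i \<in> drops \<sigma> h ` ?I"
    unfolding d_val_def using fin1 ne by (intro Min_in) auto
  then obtain s1 where s1: "s1 \<in> ?I" "drops \<sigma> h s1 = d_val \<sigma> h i" by auto
  let ?A = "(\<lambda>s. \<sigma> (s h)) ` {s \<in> ?I. drops \<sigma> h s = d_val \<sigma> h i}"
  have fin2: "finite ?A"
    by (rule finite_subset[of _ "\<sigma> ` {0..i}"]) (auto simp: idx_seqs_def)
  have ne2: "?A \<noteq> {}" using s1 by blast
  have "p_val \<sigma> h i \<in> ?A" unfolding p_val_def using fin2 ne2 by (rule Min_in)
  then obtain s2 where s2: "s2 \<in> ?I" "drops \<sigma> h s2 = d_val \<sigma> h i" "\<sigma> (s2 h) = p_val \<sigma> h i" by auto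
  have ex: "\<exists>s\<in>?I. V \<sigma> h s = dp \<sigma> h i"
    using s2 by (auto simp: V_def dp_def)
  have all: "dp \<sigma> h i \<le> V \<sigma> h s" if s: "s \<in> ?I" for s
  proof -
    have "d_val \<sigma> h i \<le> drops \<sigma> h s" unfolding d_val_def using fin1 s by (intro Min_le) auto
    moreover have "p_val \<sigma> h i \<le> \<sigma> (s h)" if "drops \<sigma> h s = d_val \<sigma> h i"
      unfolding p_val_def using fin2 s that by (intro Min_le) auto
    ultimately show ?thesis by (cases "drops \<sigma> h s = d_val \<sigma> h i") (auto simp: V_def dp_def)
  qed
  from ex all show ?thesis by blast
qed

lemma dp_eqI:
  assumes "h \<le> i" "s0 \<in> idx_seqs h i" "V \<sigma> h s0 = z" "\<And>s. s \<in> idx_seqs h i \<Longrightarrow> z \<le> V \<sigma> h s"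
  shows "dp \<sigma> h i = z"
proof -
  from dp_char[OF assms(1), of \<sigma>] obtain s where "s \<in> idx_seqs h i" "V \<sigma> h s = dp \<sigma> h i"
    and "\<forall>s\<in>idx_seqs h i. dp \<sigma> h i \<le> V \<sigma> h s" by blast
  then have "z \<le> dp \<sigma> h i" "dp \<sigma> h i \<le> z" using assms by force+
  then show ?thesis by simp
qed

lemma dp0: "dp \<sigma> 0 i = (0, int (\<sigma> 0))"
proof (rule dp_eqI[OF _ idx_id])
  show "V \<sigma> 0 (\<lambda>l. l) = (0, int (\<sigma> 0))" by (simp add: V_def drops_def)
  fix s assume "s \<in> idx_seqs 0 i"
  then show "(0, int (\<sigma> 0)) \<le> V \<sigma> 0 s" by (simp add: V_def drops_def idx_seqs_def)
qed auto

lemma dp_rec: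
  fixes g j :: nat and \<sigma> :: "nat \<Rightarrow> nat"
  assumes "g \<le> j"
  defines "a \<equiv> dp \<sigma> g j"
  defines "st \<equiv> (fst a + (if snd a > int (\<sigma> (Suc j)) then 1 else 0), int (\<sigma> (Suc j)))"
  shows "dp \<sigma> (Suc g) (Suc j) = (if Suc g < Suc j then min (dp \<sigma> (Suc g) j) st else st)"
proof -
  let ?z = "(if Suc g < Suc j then min (dp \<sigma> (Suc g) j) st else st)"
  from dp_char[OF assms(1), of \<sigma>] obtain s where s: "s \<in> idx_seqs g j" "V \<sigma> g s = a"
    and amin: "\<forall>t\<in>idx_seqs g j. a \<le> V \<sigma> g t" unfolding a_def by blast
  have zst: "?z \<le> st" by auto
  have lb: "?z \<le> V \<sigma> (Suc g) t" if t: "t \<in> idx_seqs (Suc g) (Suc j)" for t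
  proof (cases "t (Suc g) \<le> j")
    case True
    then have t': "t \<in> idx_seqs (Suc g) j" using t by (simp add: idx_seqs_def)
    have "Suc g \<le> t (Suc g)" using idx_ge[OF t] by simp
    with True have lt: "Suc g < Suc j" by simp
    from dp_char[of "Suc g" j \<sigma>] lt t' have "dp \<sigma> (Suc g) j \<le> V \<sigma> (Suc g) t" by auto
    with lt show ?thesis by (simp add: min.coboundedI1)
  next
    case False
    with t have tj: "t (Suc g) = Suc j" by (simp add: idx_seqs_def)
    have "t g < t (Suc g)" using t by (simp add: idx_seqs_def)
    then have t': "t \<in> idx_seqs g j" using t tj by (simp add: idx_seqs_def)
    with amin have "a \<le> V \<sigma> g t" by blast
    then have "st \<le> V \<sigma> (Suc g) t"
      unfolding st_def V_def drops_Suc tj by (cases a) auto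
    with zst show ?thesis by simp
  qed
  show ?thesis
  proof (cases "Suc g < Suc j \<and> dp \<sigma> (Suc g) j \<le> st")
    case True
    then have z: "?z = dp \<sigma> (Suc g) j" by (simp add: min_def)
    from dp_char[of "Suc g" j \<sigma>] True obtain t where "t \<in> idx_seqs (Suc g) j" "V \<sigma> (Suc g) t = dp \<sigma> (Suc g) j" by auto
    moreover then have "t \<in> idx_seqs (Suc g) (Suc j)" by (simp add: idx_seqs_def)
    ultimately show ?thesis using lb z assms(1) by (intro dp_eqI[of _ _ t]) auto
  next
    case False
    then have z: "?z = st" by (auto simp: min_def)
    define s' where "s' = s(Suc g := Suc j)"
    have "s g \<le> j" using idx_last[OF s(1), of g] s(1) by (simp add: idx_seqs_def)
    then have s'I: "s' \<in> idx_seqs (Suc g) (Suc j)" using s(1)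
      by (auto simp: idx_seqs_def s'_def less_Suc_eq)
    have "drops \<sigma> g s' = drops \<sigma> g s" by (rule drops_cong) (simp add: s'_def)
    then have "V \<sigma> (Suc g) s' = st"
      using s(2) unfolding st_def V_def drops_Suc by (auto simp: s'_def)
    then show ?thesis using lb z s'I assms(1) by (intro dp_eqI[of _ _ s']) auto
  qed
qed


lemma dp_strict:
  assumes hi: "Suc h \<le> i" and inj: "inj_on \<sigma> {0..i}"
  shows "dp \<sigma> h i < dp \<sigma> (Suc h) i"
proof -
  from dp_char[OF hi, of \<sigma>] obtain s where s: "s \<in> idx_seqs (Suc h) i" "V \<sigma> (Suc h) s = dp \<sigma> (Suc h) i" by blast
  have lt: "s h < s (Suc h)" and si: "s (Suc h) \<le> i" using s(1) by (auto simp: idx_seqs_def)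
  have sh: "s h \<le> i" using lt si by simp
  have sI: "s \<in> idx_seqs h i" using s(1) sh unfolding idx_seqs_def by simp
  have "dp \<sigma> h i \<le> V \<sigma> h s" using dp_char[of h i \<sigma>] hi sI by auto
  moreover have "\<sigma> (s h) \<noteq> \<sigma> (s (Suc h))"
  proof
    assume eq: "\<sigma> (s h) = \<sigma> (s (Suc h))"
    have "s h = s (Suc h)" by (rule inj_onD[OF inj eq]) (use lt si in auto)
    with lt show False by simp
  qed
  then have "V \<sigma> h s < V \<sigma> (Suc h) s"
    unfolding V_def drops_Suc by auto
  ultimately show ?thesis using s(2) by simp
qed

lemma dp_mono_strict:
  assumes "a < b" "b \<le> i" "inj_on \<sigma> {0..i}"
  shows "dp \<sigma> a i < dp \<sigma> b i"
  using assms(1,2)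
proof (induction b)
  case 0 then show ?case by simp
next
  case (Suc b)
  have st: "dp \<sigma> b i < dp \<sigma> (Suc b) i" using dp_strict[OF Suc.prems(2) assms(3)] .
  show ?case
  proof (cases "a = b")
    case True then show ?thesis using st by simp
  next
    case False
    then have "dp \<sigma> a i < dp \<sigma> b i" using Suc by auto
    then show ?thesis using st by simp
  qed
qed

lemma dp_snd:
  assumes "h \<le> i"
  shows "\<exists>l\<le>i. snd (dp \<sigma> h i) = int (\<sigma> l)"
proof -
  from dp_char[OF assms, of \<sigma>] obtain s where s: "s \<in> idx_seqs h i" "V \<sigma> h s = dp \<sigma> h i" by blast
  have "snd (dp \<sigma> h i) = int (\<sigma> (s h))" using s(2)[symmetric] by (simp add: V_def)
  moreover have "s h \<le> i" using s(1) by (simp add: idx_seqs_def)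
  ultimately show ?thesis by blast
qed

theorem lemma10:
  fixes n i :: nat and x :: "nat \<Rightarrow> real" and \<sigma> :: "nat \<Rightarrow> nat" and d p :: int
  assumes sorted: "\<And>a b. a \<le> b \<Longrightarrow> b \<le> n + 1 \<Longrightarrow> x a \<le> x b"
    and perm: "bij_betw \<sigma> {0..n+1} {0..n+1}"
    and pi_def: "\<And>a b. a < b \<Longrightarrow> b \<le> n + 1 \<Longrightarrow>
        (\<sigma> a > \<sigma> b \<longleftrightarrow> (frac (x a), - x a, a) < (frac (x b), - x b, b))"
    and i_le: "i \<le> n"
    and mem: "(d + 1, p) \<in> DP \<sigma> i"
    and ge: "(d, p) \<ge> (0, int (\<sigma> 0))"
  shows "(d, p) \<in> DP \<sigma> i"
proof -
  have injN: "inj_on \<sigma> {0..n+1}" using perm by (rule bij_betw_imp_inj_on)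
  have inj: "inj_on \<sigma> {0..j}" if "j \<le> n + 1" for j
    using injN by (rule inj_on_subset) (use that in auto)
  have Inv: "\<forall>h\<le>j. \<forall>e q. dp \<sigma> h j = (e+1,q) \<longrightarrow> (e,q) \<ge> (0, int (\<sigma> 0)) \<longrightarrow> (\<exists>k\<le>j. dp \<sigma> k j = (e,q))"
    if "j \<le> n" for j
    using that
  proof (induction j)
    case 0
    show ?case using dp0[of \<sigma> 0] by auto
  next
    case (Suc j)
    have IH: "\<forall>h\<le>j. \<forall>e q. dp \<sigma> h j = (e+1,q) \<longrightarrow> (e,q) \<ge> (0, int (\<sigma> 0)) \<longrightarrow> (\<exists>k\<le>j. dp \<sigma> k j = (e,q))"
      using Suc by simp
    have injj: "inj_on \<sigma> {0..Suc j}" using inj Suc.prems by simp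
    show ?case
    proof (intro allI impI)
      fix h e q assume h: "h \<le> Suc j" and hc: "dp \<sigma> h (Suc j) = (e+1,q)" and hge: "(e,q) \<ge> (0, int (\<sigma> 0))"
      let ?D = "\<lambda>h. fst (dp \<sigma> h j)" and ?P = "\<lambda>h. snd (dp \<sigma> h j)"
      have pair: "(?D a, ?P a) = dp \<sigma> a j" for a by simp
      have P0: "?P 0 = int (\<sigma> 0)" by (simp add: dp0)
      show "\<exists>k\<le>Suc j. dp \<sigma> k (Suc j) = (e,q)"
      proof (rule step_abs[where D = ?D and P = ?P and m = "Suc j" and v = "int (\<sigma> (Suc j))"
            and c' = "\<lambda>h. dp \<sigma> h (Suc j)"])
        show "\<And>a b. a < b \<Longrightarrow> b < Suc j \<Longrightarrow> (?D a, ?P a) < (?D b, ?P b)"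
          unfolding pair using dp_mono_strict inj Suc.prems by simp
        show "?D 0 = 0" by (simp add: dp0)
        show "0 < Suc j" by simp
        show "?P a \<noteq> int (\<sigma> (Suc j))" if "a < Suc j" for a
        proof -
          obtain l where l: "l \<le> j" "?P a = int (\<sigma> l)" using dp_snd[of a j \<sigma>] \<open>a < Suc j\<close> by auto
          have "\<sigma> l \<noteq> \<sigma> (Suc j)" using injj l(1) by (auto dest: inj_onD)
          then show ?thesis using l by simp
        qed
        show "\<exists>k<Suc j. (?D k, ?P k) = (e', q')"
          if "a < Suc j" "(?D a, ?P a) = (e'+1, q')" "(e', q') \<ge> (0, ?P 0)" for a e' q'
        proof -
          have "a \<le> j" using that(1) by simp
          with IH that(2,3) obtain k where "k \<le> j" "dp \<sigma> k j = (e', q')" unfolding pair P0 by blast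
          then show ?thesis unfolding pair by (intro exI[of _ k]) simp
        qed
        show "dp \<sigma> a (Suc j) = (if a = 0 then (?D 0, ?P 0) else if a < Suc j then min (?D a, ?P a)
               (?D (a-1) + (if ?P (a-1) > int (\<sigma> (Suc j)) then 1 else 0), int (\<sigma> (Suc j)))
             else (?D (a-1) + (if ?P (a-1) > int (\<sigma> (Suc j)) then 1 else 0), int (\<sigma> (Suc j))))"
          if "a \<le> Suc j" for a
        proof (cases a)
          case 0 then show ?thesis by (simp add: dp0)
        next
          case (Suc g)
          then have "g \<le> j" using that by simp
          from dp_rec[OF this, of \<sigma>] Suc show ?thesis by simp
        qed
        show "h \<le> Suc j" by fact
        show "dp \<sigma> h (Suc j) = (e+1,q)" by fact
        show "(e,q) \<ge> (0, ?P 0)" using hge P0 by simp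
      qed
    qed
  qed
  from mem obtain h where h: "h \<le> i" "dp \<sigma> h i = (d+1,p)" by (auto simp: DP_def)
  from Inv[OF i_le] h ge obtain k where "k \<le> i" "dp \<sigma> k i = (d,p)" by blast
  then have "\<exists>h. (d, p) = dp \<sigma> h i \<and> h \<le> i" by metis
  then show ?thesis unfolding DP_def by blast
qed

end
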